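(* Let $k\ge 1$ and let $F$ be a partially colored forest. If Alice can win the $k$-Modified Coloring Game on $\mathcal{R}(F)$, then she can win the $k$-coloring game on $F$.
   Context: All graphs are finite. A partial coloring of a graph assigns to some vertices colors from a fixed set $C$ of $k$ colors so that adjacent colored vertices receive different colors. A color $\alpha\in C$ is legal for an uncolored vertex $v$ if no neighbor of $v$ is colored $\alpha$. The $k$-coloring game on a (partially colored) graph $G$: Alice and Bob alternate turns, Alice first, each turn coloring an uncolored vertex with a legal color from $C$. If at any point some uncolored vertex has no legal color, Bob wins; if every vertex becomes colored, Alice wins. The $k$-Modified Coloring Game ($k$-MCG) is the same except that Bob plays first and Bob may choose to pass on any turn. For a partially colored forest $F$, a trunk of $F$ is a maximal connected subgraph $R$ of $F$ such that every colored vertex of $R$ is a leaf of $R$ (so each uncolored vertex lies in exactly one trunk, and a colored vertex of degree $d$ lies in exactly $d$ trunks). $\mathcal{R}(F)$ denotes the partially colored forest that is the disjoint union of all trunks of $F$ (a colored vertex lying in several trunks appears as a separate copy, with its color, in each of them). *)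

theory Defs
  imports Main
begin

text \<open>A partial coloring is c :: 'v => nat option; None means
uncolored. The color set C of k colors is {0..<k}.\<close>

definition simple_graph :: "'v set \<Rightarrow> ('v \<Rightarrow> 'v \<Rightarrow> bool) \<Rightarrow> bool" where
  "simple_graph V E \<longleftrightarrow> finite V \<and> (\<forall>u v. E u v \<longrightarrow> u \<in> V \<and> v \<in> V)
     \<and> (\<forall>u v. E u v \<longrightarrow> E v u) \<and> (\<forall>v. \<not> E v v)"

definition forest :: "'v set \<Rightarrow> ('v \<Rightarrow> 'v \<Rightarrow> bool) \<Rightarrow> bool" where
  "forest V E \<longleftrightarrow> simple_graph V E \<and>
     \<not> (\<exists>xs. length xs \<ge> 3 \<and> distinct xs \<and> set xs \<subseteq> V
          \<and> (\<forall>i. Suc i < length xs \<longrightarrow> E (xs ! i) (xs ! Suc i)) \<and> E (last xs) (hd xs))"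

definition partial_coloring :: "'v set \<Rightarrow> ('v \<Rightarrow> 'v \<Rightarrow> bool) \<Rightarrow> nat \<Rightarrow> ('v \<Rightarrow> nat option) \<Rightarrow> bool" where
  "partial_coloring V E k c \<longleftrightarrow>
     (\<forall>v\<in>V. \<forall>a. c v = Some a \<longrightarrow> a < k) \<and>
     (\<forall>u\<in>V. \<forall>v\<in>V. E u v \<longrightarrow> c u = None \<or> c u \<noteq> c v)"

definition legal :: "'v set \<Rightarrow> ('v \<Rightarrow> 'v \<Rightarrow> bool) \<Rightarrow> nat \<Rightarrow> ('v \<Rightarrow> nat option) \<Rightarrow> 'v \<Rightarrow> nat \<Rightarrow> bool" where
  "legal V E k c v a \<longleftrightarrow> a < k \<and> (\<forall>u\<in>V. E v u \<longrightarrow> c u \<noteq> Some a)"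

definition stuck :: "'v set \<Rightarrow> ('v \<Rightarrow> 'v \<Rightarrow> bool) \<Rightarrow> nat \<Rightarrow> ('v \<Rightarrow> nat option) \<Rightarrow> bool" where
  "stuck V E k c \<longleftrightarrow> (\<exists>v\<in>V. c v = None \<and> (\<forall>a. \<not> legal V E k c v a))"

definition complete :: "'v set \<Rightarrow> ('v \<Rightarrow> nat option) \<Rightarrow> bool" where
  "complete V c \<longleftrightarrow> (\<forall>v\<in>V. c v \<noteq> None)"

definition move :: "'v set \<Rightarrow> ('v \<Rightarrow> 'v \<Rightarrow> bool) \<Rightarrow> nat \<Rightarrow> ('v \<Rightarrow> nat option) \<Rightarrow> 'v \<Rightarrow> nat \<Rightarrow> bool" where
  "move V E k c v a \<longleftrightarrow> v \<in> V \<and> c v = None \<and> legal V E k c v a"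

text \<open>cg_A: Alice, to move at position c, has a winning strategy;
cg_B: Bob to move at c, Alice has a winning strategy.\<close>

inductive cg_A and cg_B for V :: "'v set" and E :: "'v \<Rightarrow> 'v \<Rightarrow> bool" and k :: nat where
  cgA_done: "\<not> stuck V E k c \<Longrightarrow> complete V c \<Longrightarrow> cg_A V E k c"
| cgA_move: "\<not> stuck V E k c \<Longrightarrow> move V E k c v a \<Longrightarrow> cg_B V E k (c(v := Some a)) \<Longrightarrow> cg_A V E k c"
| cgB_done: "\<not> stuck V E k c \<Longrightarrow> complete V c \<Longrightarrow> cg_B V E k c"
| cgB_move: "\<not> stuck V E k c \<Longrightarrow> (\<forall>v a. move V E k c v a \<longrightarrow> cg_A V E k (c(v := Some a)))
             \<Longrightarrow> cg_B V E k c"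

definition alice_wins_cg :: "'v set \<Rightarrow> ('v \<Rightarrow> 'v \<Rightarrow> bool) \<Rightarrow> nat \<Rightarrow> ('v \<Rightarrow> nat option) \<Rightarrow> bool" where
  "alice_wins_cg V E k c \<longleftrightarrow> cg_A V E k c"

inductive mcg_A and mcg_B for V :: "'v set" and E :: "'v \<Rightarrow> 'v \<Rightarrow> bool" and k :: nat where
  mcgA_done: "\<not> stuck V E k c \<Longrightarrow> complete V c \<Longrightarrow> mcg_A V E k c"
| mcgA_move: "\<not> stuck V E k c \<Longrightarrow> move V E k c v a \<Longrightarrow> mcg_B V E k (c(v := Some a)) \<Longrightarrow> mcg_A V E k c"
| mcgB_done: "\<not> stuck V E k c \<Longrightarrow> complete V c \<Longrightarrow> mcg_B V E k c"
| mcgB_move: "\<not> stuck V E k c \<Longrightarrow> mcg_A V E k c \<comment> \<open>Bob passes\<close>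
             \<Longrightarrow> (\<forall>v a. move V E k c v a \<longrightarrow> mcg_A V E k (c(v := Some a)))
             \<Longrightarrow> mcg_B V E k c"

definition alice_wins_mcg :: "'v set \<Rightarrow> ('v \<Rightarrow> 'v \<Rightarrow> bool) \<Rightarrow> nat \<Rightarrow> ('v \<Rightarrow> nat option) \<Rightarrow> bool" where
  "alice_wins_mcg V E k c \<longleftrightarrow> mcg_B V E k c"

definition is_subgraph :: "'v set \<Rightarrow> ('v \<Rightarrow> 'v \<Rightarrow> bool) \<Rightarrow> 'v set \<Rightarrow> ('v \<times> 'v) set \<Rightarrow> bool" where
  "is_subgraph V E W D \<longleftrightarrow> W \<subseteq> V \<and> D \<subseteq> W \<times> W \<and> (\<forall>x y. (x, y) \<in> D \<longrightarrow> E x y) \<and> sym D"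

definition sg_connected :: "'v set \<Rightarrow> ('v \<times> 'v) set \<Rightarrow> bool" where
  "sg_connected W D \<longleftrightarrow> W \<noteq> {} \<and> (\<forall>x\<in>W. \<forall>y\<in>W. (x, y) \<in> D\<^sup>*)"

definition sg_degree :: "('v \<times> 'v) set \<Rightarrow> 'v \<Rightarrow> nat" where
  "sg_degree D x = card {y. (x, y) \<in> D}"

definition trunk_candidate :: "'v set \<Rightarrow> ('v \<Rightarrow> 'v \<Rightarrow> bool) \<Rightarrow> ('v \<Rightarrow> nat option) \<Rightarrow> 'v set \<Rightarrow> ('v \<times> 'v) set \<Rightarrow> bool" where
  "trunk_candidate V E c W D \<longleftrightarrow> is_subgraph V E W D \<and> sg_connected W D
     \<and> (\<forall>x\<in>W. c x \<noteq> None \<longrightarrow> sg_degree D x = 1)"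

definition is_trunk :: "'v set \<Rightarrow> ('v \<Rightarrow> 'v \<Rightarrow> bool) \<Rightarrow> ('v \<Rightarrow> nat option) \<Rightarrow> 'v set \<Rightarrow> ('v \<times> 'v) set \<Rightarrow> bool" where
  "is_trunk V E c W D \<longleftrightarrow> trunk_candidate V E c W D \<and>
     \<not> (\<exists>W' D'. trunk_candidate V E c W' D' \<and> W \<subseteq> W' \<and> D \<subseteq> D' \<and> (W, D) \<noteq> (W', D'))"

definition trunks :: "'v set \<Rightarrow> ('v \<Rightarrow> 'v \<Rightarrow> bool) \<Rightarrow> ('v \<Rightarrow> nat option) \<Rightarrow> ('v set \<times> ('v \<times> 'v) set) set" where
  "trunks V E c = {(W, D). is_trunk V E c W D}"

text \<open>R(F): disjoint union of all trunks; a vertex of R(F) is a pair (trunk, vertex of F in it).\<close>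

definition RV :: "'v set \<Rightarrow> ('v \<Rightarrow> 'v \<Rightarrow> bool) \<Rightarrow> ('v \<Rightarrow> nat option)
                  \<Rightarrow> (('v set \<times> ('v \<times> 'v) set) \<times> 'v) set" where
  "RV V E c = {(t, v). t \<in> trunks V E c \<and> v \<in> fst t}"

definition RE :: "'v set \<Rightarrow> ('v \<Rightarrow> 'v \<Rightarrow> bool) \<Rightarrow> ('v \<Rightarrow> nat option)
                  \<Rightarrow> (('v set \<times> ('v \<times> 'v) set) \<times> 'v) \<Rightarrow> (('v set \<times> ('v \<times> 'v) set) \<times> 'v) \<Rightarrow> bool" where
  "RE V E c p q \<longleftrightarrow> fst p \<in> trunks V E c \<and> fst p = fst q \<and> (snd p, snd q) \<in> snd (fst p)"

definition Rc :: "('v \<Rightarrow> nat option) \<Rightarrow> (('v set \<times> ('v \<times> 'v) set) \<times> 'v) \<Rightarrow> nat option" where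
  "Rc c p = c (snd p)"

end

theory Submission
  imports Defs
begin

lemma rtrancl_path:
  "(a,b) \<in> R\<^sup>* \<Longrightarrow> \<exists>xs. xs \<noteq> [] \<and> hd xs = a \<and> last xs = b \<and> distinct xs \<and>
      (\<forall>i. Suc i < length xs \<longrightarrow> (xs!i, xs!Suc i) \<in> R)"
proof (induction rule: rtrancl_induct)
  case base
  then show ?case by (intro exI[of _ "[a]"]) auto
next
  case (step y z)
  then obtain xs where xs: "xs \<noteq> []" "hd xs = a" "last xs = y" "distinct xs"
      "\<forall>i. Suc i < length xs \<longrightarrow> (xs!i, xs!Suc i) \<in> R" by blast
  show ?case
  proof (cases "z \<in> set xs")
    case True
    then obtain i where i: "i < length xs" "xs!i = z" by (auto simp: in_set_conv_nth)
    show ?thesis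
    proof (intro exI[of _ "take (Suc i) xs"] conjI allI impI)
      show "take (Suc i) xs \<noteq> []" using xs(1) by simp
      show "hd (take (Suc i) xs) = a" using xs(1,2) by (cases xs) auto
      show "last (take (Suc i) xs) = z" using i by (simp add: last_conv_nth min_def take_Suc_conv_app_nth)
      show "distinct (take (Suc i) xs)" using xs(4) by simp
      fix j assume "Suc j < length (take (Suc i) xs)"
      then show "(take (Suc i) xs ! j, take (Suc i) xs ! Suc j) \<in> R" using xs(5) by auto
    qed
  next
    case False
    show ?thesis
    proof (intro exI[of _ "xs @ [z]"] conjI allI impI)
      show "xs @ [z] \<noteq> []" by simp
      show "hd (xs @ [z]) = a" using xs by simp
      show "last (xs @ [z]) = z" by simp
      show "distinct (xs @ [z])" using xs False by simp
      fix j assume j: "Suc j < length (xs @ [z])"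
      show "((xs @ [z]) ! j, (xs @ [z]) ! Suc j) \<in> R"
      proof (cases "Suc j < length xs")
        case True then show ?thesis using xs(5) by (simp add: nth_append)
      next
        case False
        then have "j = length xs - 1" "Suc j = length xs" using j by auto
        then show ?thesis using xs(1,3) step(2) by (simp add: nth_append last_conv_nth)
      qed
    qed
  qed
qed

context
  fixes V :: "'v set" and E :: "'v \<Rightarrow> 'v \<Rightarrow> bool" and c :: "'v \<Rightarrow> nat option"
  assumes F: "forest V E"
begin

lemma sg: "simple_graph V E" using F by (simp add: forest_def)
lemma E_V: "E u v \<Longrightarrow> u \<in> V \<and> v \<in> V" using sg unfolding simple_graph_def by metis
lemma E_sym: "E u v \<Longrightarrow> E v u" using sg unfolding simple_graph_def by metis
lemma E_irr: "\<not> E v v" using sg unfolding simple_graph_def by metis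
lemma finV: "finite V" using sg unfolding simple_graph_def by metis

lemma nocycle: "length xs \<ge> 3 \<Longrightarrow> distinct xs \<Longrightarrow> set xs \<subseteq> V \<Longrightarrow>
   (\<forall>i. Suc i < length xs \<longrightarrow> E (xs!i) (xs!Suc i)) \<Longrightarrow> E (last xs) (hd xs) \<Longrightarrow> False"
  using F unfolding forest_def by blast

lemma trunk_nbr:
  assumes t: "is_trunk V E c W D" and w: "w \<in> W" "c w = None" and e: "E w u"
  shows "(w,u) \<in> D"
proof (rule ccontr)
  assume nd: "(w,u) \<notin> D"
  have cand: "trunk_candidate V E c W D" using t is_trunk_def by blast
  hence sub: "is_subgraph V E W D" and con: "sg_connected W D"
    and deg: "\<forall>x\<in>W. c x \<noteq> None \<longrightarrow> sg_degree D x = 1" by (auto simp: trunk_candidate_def)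
  have WV: "W \<subseteq> V" and DW: "D \<subseteq> W \<times> W" and DE: "\<forall>x y. (x,y)\<in>D \<longrightarrow> E x y" and sD: "sym D"
    using sub by (auto simp: is_subgraph_def)
  show False
  proof (cases "u \<in> W")
    case True
    have "(w,u) \<in> D\<^sup>*" using con w True by (auto simp: sg_connected_def)
    then obtain xs where xs: "xs \<noteq> []" "hd xs = w" "last xs = u" "distinct xs"
      "\<forall>i. Suc i < length xs \<longrightarrow> (xs!i, xs!Suc i) \<in> D" using rtrancl_path by metis
    have setW: "set xs \<subseteq> W"
    proof
      fix x assume "x \<in> set xs"
      then obtain i where i: "i < length xs" "xs!i = x" by (auto simp: in_set_conv_nth)
      show "x \<in> W"
      proof (cases i)
        case 0 thus ?thesis using i xs w by (simp add: hd_conv_nth)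
      next
        case (Suc j) thus ?thesis using i xs(5) DW by fastforce
      qed
    qed
    have "length xs \<noteq> 1"
    proof
      assume "length xs = 1"
      then have "hd xs = last xs" using xs(1) by (cases xs) auto
      then show False using xs E_irr e by auto
    qed
    moreover have "length xs \<noteq> 2"
    proof
      assume l2: "length xs = 2"
      have "(xs!0, xs!Suc 0) \<in> D" using xs(5) l2 by auto
      moreover have "xs!0 = w" using xs(1,2) by (simp add: hd_conv_nth)
      moreover have "xs!Suc 0 = u" using xs(3) l2 xs(1) by (simp add: last_conv_nth)
      ultimately show False using nd by simp
    qed
    moreover have "length xs \<noteq> 0" using xs(1) by simp
    ultimately have len: "length xs \<ge> 3" by linarith
    show False
      using nocycle[of xs] len xs setW WV DE e E_sym by blast
  next
    case False
    define W' where "W' = insert u W"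
    define D' where "D' = D \<union> {(w,u),(u,w)}"
    have uV: "u \<in> V" using E_V e by blast
    have uw: "u \<noteq> w" using False w by auto
    have sub': "is_subgraph V E W' D'"
      unfolding is_subgraph_def W'_def D'_def
      using WV uV DW DE e E_sym w sD by (auto simp: sym_def)
    have DD': "D\<^sup>* \<subseteq> D'\<^sup>*" unfolding D'_def by (rule rtrancl_mono) auto
    have wu: "(w,u) \<in> D'\<^sup>*" "(u,w) \<in> D'\<^sup>*" unfolding D'_def by auto
    have con': "sg_connected W' D'"
      unfolding sg_connected_def
    proof (intro conjI ballI)
      show "W' \<noteq> {}" unfolding W'_def by simp
      fix x y assume x: "x \<in> W'" and y: "y \<in> W'"
      have r: "\<And>a b. a \<in> W \<Longrightarrow> b \<in> W \<Longrightarrow> (a,b) \<in> D'\<^sup>*"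
        using con DD' unfolding sg_connected_def by blast
      show "(x,y) \<in> D'\<^sup>*"
        using x y w(1) r[of x w] r[of w y] wu unfolding W'_def
        by (auto intro: rtrancl_trans)
    qed
    have deg': "\<forall>x\<in>W'. c x \<noteq> None \<longrightarrow> sg_degree D' x = 1"
    proof (intro ballI impI)
      fix x assume x: "x \<in> W'" and cx: "c x \<noteq> None"
      show "sg_degree D' x = 1"
      proof (cases "x = u")
        case True
        have "{y. (x,y) \<in> D'} = {w}" using True DW False uw unfolding D'_def by auto
        then show ?thesis by (simp add: sg_degree_def)
      next
        case xu: False
        then have xW: "x \<in> W" using x W'_def by auto
        have "x \<noteq> w" using cx w by auto
        then have "{y. (x,y) \<in> D'} = {y. (x,y) \<in> D}" using xu unfolding D'_def by auto
        then show ?thesis using deg xW cx by (simp add: sg_degree_def)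
      qed
    qed
    have "trunk_candidate V E c W' D'"
      unfolding trunk_candidate_def using sub' con' deg' by blast
    moreover have "W \<subseteq> W'" "D \<subseteq> D'" "(W,D) \<noteq> (W',D')" using False unfolding W'_def D'_def by auto
    ultimately show False using t unfolding is_trunk_def by blast
  qed
qed

lemma trunk_sub:
  assumes t1: "is_trunk V E c W1 D1" and t2: "is_trunk V E c W2 D2"
    and w: "w \<in> W1" "w \<in> W2" "c w = None"
  shows "W1 \<subseteq> W2 \<and> D1 \<subseteq> D2"
proof -
  have cand1: "trunk_candidate V E c W1 D1" using t1 is_trunk_def by blast
  hence con1: "sg_connected W1 D1" and deg1: "\<forall>x\<in>W1. c x \<noteq> None \<longrightarrow> sg_degree D1 x = 1"
    and sub1: "is_subgraph V E W1 D1" by (auto simp: trunk_candidate_def)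
  have DW1: "D1 \<subseteq> W1 \<times> W1" and DE1: "\<forall>x y. (x,y)\<in>D1 \<longrightarrow> E x y" and sD1: "sym D1"
    using sub1 by (auto simp: is_subgraph_def)
  have cand2: "trunk_candidate V E c W2 D2" using t2 is_trunk_def by blast
  hence sub2: "is_subgraph V E W2 D2" by (auto simp: trunk_candidate_def)
  have DW2: "D2 \<subseteq> W2 \<times> W2" and sD2: "sym D2"
    using sub2 by (auto simp: is_subgraph_def)
  have key: "x \<in> W2 \<and> (c x \<noteq> None \<longrightarrow> (\<forall>z. (x,z)\<in>D1 \<longrightarrow> (x,z)\<in>D2))"
    if "(w,x) \<in> D1\<^sup>*" for x
    using that
  proof (induction rule: rtrancl_induct)
    case base
    then show ?case using w by simp
  next
    case (step y z)
    have yz2: "(y,z) \<in> D2"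
    proof (cases "c y = None")
      case True
      then show ?thesis using trunk_nbr[OF t2, of y z] step DE1 by blast
    next
      case False
      then show ?thesis using step by blast
    qed
    then have zW: "z \<in> W2" using DW2 by auto
    have "(z,z') \<in> D2" if cz: "c z \<noteq> None" and zz: "(z,z') \<in> D1" for z'
    proof -
      have zW1: "z \<in> W1" using step(2) DW1 by auto
      have "card {y'. (z,y') \<in> D1} = 1" using deg1 zW1 cz by (simp add: sg_degree_def)
      moreover have "(z,y) \<in> D1" using step(2) sD1 by (auto simp: sym_def)
      ultimately have "{y'. (z,y') \<in> D1} = {y}" by (metis card_1_singletonE mem_Collect_eq singletonD)
      then have "z' = y" using zz by auto
      then show ?thesis using yz2 sD2 by (auto simp: sym_def)
    qed
    then show ?case using zW by blast
  qed
  have "W1 \<subseteq> W2" using key con1 w unfolding sg_connected_def by blast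
  moreover have "D1 \<subseteq> D2"
  proof
    fix ab assume ab: "ab \<in> D1"
    obtain a b where abd: "ab = (a,b)" by (cases ab)
    have aW: "a \<in> W1" using ab abd DW1 by auto
    have k: "a \<in> W2 \<and> (c a \<noteq> None \<longrightarrow> (\<forall>z. (a,z)\<in>D1 \<longrightarrow> (a,z)\<in>D2))"
      using key con1 w aW unfolding sg_connected_def by blast
    show "ab \<in> D2"
    proof (cases "c a = None")
      case True
      then show ?thesis using trunk_nbr[OF t2, of a b] k ab abd DE1 by blast
    next
      case False then show ?thesis using k ab abd by blast
    qed
  qed
  ultimately show ?thesis by blast
qed

lemma trunk_unique:
  assumes t1: "is_trunk V E c W1 D1" and t2: "is_trunk V E c W2 D2"
    and w: "w \<in> W1" "w \<in> W2" "c w = None"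
  shows "W1 = W2 \<and> D1 = D2"
proof -
  have s: "W1 \<subseteq> W2 \<and> D1 \<subseteq> D2" using trunk_sub[OF t1 t2 w] .
  have cand2: "trunk_candidate V E c W2 D2" using t2 is_trunk_def by blast
  then show ?thesis using t1 s unfolding is_trunk_def by blast
qed

lemma trunk_exists:
  assumes v: "v \<in> V" "c v = None"
  shows "\<exists>W D. is_trunk V E c W D \<and> v \<in> W"
proof -
  let ?S = "{(W,D). trunk_candidate V E c W D \<and> v \<in> W}"
  have candV: "W \<subseteq> V \<and> D \<subseteq> V \<times> V" if "trunk_candidate V E c W D" for W D
    using that unfolding trunk_candidate_def is_subgraph_def by blast
  have "?S \<subseteq> Pow V \<times> Pow (V \<times> V)" using candV by auto
  then have fin: "finite ?S" using finV by (meson finite_Pow_iff finite_SigmaI finite_subset)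
  have "trunk_candidate V E c {v} {}"
    unfolding trunk_candidate_def is_subgraph_def sg_connected_def sg_degree_def
    using v by (auto simp: sym_def)
  then have ne: "({v},{}) \<in> ?S" by simp
  define f :: "'v set \<times> ('v \<times> 'v) set \<Rightarrow> nat" where "f = (\<lambda>(W,D). card W + card D)"
  have "Max (f ` ?S) \<in> f ` ?S" using fin ne by (intro Max_in) auto
  then obtain m where m: "m \<in> ?S" "f m = Max (f ` ?S)" by auto
  have mx: "f s \<le> f m" if "s \<in> ?S" for s using m(2) fin that by simp
  obtain W D where mWD: "m = (W,D)" by (cases m)
  have cand: "trunk_candidate V E c W D" "v \<in> W" using m(1) mWD by auto
  have "is_trunk V E c W D"
    unfolding is_trunk_def
  proof (intro conjI notI)
    show "trunk_candidate V E c W D" using cand by simp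
    assume "\<exists>W' D'. trunk_candidate V E c W' D' \<and> W \<subseteq> W' \<and> D \<subseteq> D' \<and> (W, D) \<noteq> (W', D')"
    then obtain W' D' where c': "trunk_candidate V E c W' D'" "W \<subseteq> W'" "D \<subseteq> D'" "(W, D) \<noteq> (W', D')"
      by blast
    have fW': "finite W'" "finite D'" using candV[OF c'(1)] finV
      by (auto intro: finite_subset)
    have "(W',D') \<in> ?S" using c' cand by auto
    then have le: "f (W',D') \<le> f (W,D)" using mx mWD by blast
    have "card W \<le> card W'" "card D \<le> card D'" using fW' c' by (auto intro: card_mono)
    moreover have "card W < card W' \<or> card D < card D'"
      using c' fW' by (metis psubsetI psubset_card_mono)
    ultimately show False using le unfolding f_def by auto
  qed
  then show ?thesis using cand by blast
qed

abbreviation corr where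
  "corr d c' \<equiv> (\<forall>p\<in>RV V E c. c' p = d (snd p)) \<and> (\<forall>v\<in>V. c v \<noteq> None \<longrightarrow> d v = c v)"

lemma RV_mem: "((W,D),v) \<in> RV V E c \<longleftrightarrow> is_trunk V E c W D \<and> v \<in> W"
  by (simp add: RV_def trunks_def)

lemma trunk_WV: "is_trunk V E c W D \<Longrightarrow> W \<subseteq> V \<and> D \<subseteq> W \<times> W \<and> (\<forall>x y. (x,y)\<in>D \<longrightarrow> E x y)"
  unfolding is_trunk_def trunk_candidate_def is_subgraph_def by blast

lemma complete_tr:
  assumes "complete (RV V E c) c'" "corr d c'"
  shows "complete V d"
  unfolding complete_def
proof
  fix v assume v: "v \<in> V"
  show "d v \<noteq> None"
  proof (cases "c v = None")
    case True
    then obtain W D where "is_trunk V E c W D" "v \<in> W" using trunk_exists v by blast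
    then have "((W,D),v) \<in> RV V E c" by (simp add: RV_mem)
    then show ?thesis using assms unfolding complete_def by force
  next
    case False then show ?thesis using assms v by auto
  qed
qed

lemma legal_RF:
  assumes p: "((W,D),v) \<in> RV V E c" and cv: "c v = None"
    and l: "legal (RV V E c) (RE V E c) k c' ((W,D),v) a" and cr: "corr d c'"
  shows "legal V E k d v a"
  unfolding legal_def
proof (intro conjI ballI impI)
  show "a < k" using l by (simp add: legal_def)
  fix u assume u: "u \<in> V" "E v u"
  have t: "is_trunk V E c W D" "v \<in> W" using p by (simp_all add: RV_mem)
  have vu: "(v,u) \<in> D" using trunk_nbr[OF t cv u(2)] .
  then have uW: "u \<in> W" using trunk_WV[OF t(1)] by auto
  have q: "((W,D),u) \<in> RV V E c" using t uW by (simp add: RV_mem)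
  have "RE V E c ((W,D),v) ((W,D),u)" using t vu by (simp add: RE_def trunks_def)
  then have "c' ((W,D),u) \<noteq> Some a" using l q by (simp add: legal_def)
  then show "d u \<noteq> Some a" using cr q by auto
qed

lemma legal_FR:
  assumes p: "((W,D),v) \<in> RV V E c"
    and l: "legal V E k d v a" and cr: "corr d c'"
  shows "legal (RV V E c) (RE V E c) k c' ((W,D),v) a"
  unfolding legal_def
proof (intro conjI ballI impI)
  show "a < k" using l by (simp add: legal_def)
  fix q assume q: "q \<in> RV V E c" "RE V E c ((W,D),v) q"
  obtain t u where qd: "q = (t,u)" by (cases q)
  have t: "is_trunk V E c W D" using p by (simp add: RV_mem)
  have "t = (W,D)" "(v,u) \<in> D" using q qd by (auto simp: RE_def)
  then have "E v u" using trunk_WV[OF t] by blast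
  then have "d u \<noteq> Some a" using l E_V by (auto simp: legal_def)
  then show "c' q \<noteq> Some a" using cr q qd by auto
qed

lemma nstuck_tr:
  assumes ns: "\<not> stuck (RV V E c) (RE V E c) k c'" and cr: "corr d c'"
  shows "\<not> stuck V E k d"
proof
  assume "stuck V E k d"
  then obtain v where v: "v \<in> V" "d v = None" "\<forall>a. \<not> legal V E k d v a" by (auto simp: stuck_def)
  have cv: "c v = None" using v cr by force
  then obtain W D where "is_trunk V E c W D" "v \<in> W" using trunk_exists v by blast
  then have p: "((W,D),v) \<in> RV V E c" by (simp add: RV_mem)
  then have "c' ((W,D),v) = None" using cr v by auto
  then obtain a where "legal (RV V E c) (RE V E c) k c' ((W,D),v) a"
    using ns p unfolding stuck_def by blast
  then show False using legal_RF[OF p cv _ cr] v by blast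
qed

lemma corr_upd:
  assumes p: "((W,D),v) \<in> RV V E c" and cv: "c v = None" and cr: "corr d c'"
  shows "corr (d(v := Some a)) (c'(((W,D),v) := Some a))"
proof (intro conjI ballI impI)
  fix q assume q: "q \<in> RV V E c"
  obtain t u where qd: "q = (t,u)" by (cases q) auto
  obtain W' D' where tt: "t = (W',D')" by (cases t)
  show "(c'(((W,D),v) := Some a)) q = (d(v := Some a)) (snd q)"
  proof (cases "u = v")
    case True
    have "is_trunk V E c W' D'" "v \<in> W'" using q qd tt True by (simp_all add: RV_mem)
    moreover have "is_trunk V E c W D" "v \<in> W" using p by (simp_all add: RV_mem)
    ultimately have "W' = W \<and> D' = D" using trunk_unique cv by blast
    then show ?thesis using qd tt True by simp
  next
    case False
    then show ?thesis using cr q qd by auto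
  qed
next
  fix w assume "w \<in> V" "c w \<noteq> None"
  then show "(d(v := Some a)) w = c w" using cr cv by auto
qed

lemma sim:
  shows "mcg_A (RV V E c) (RE V E c) k c' \<Longrightarrow> corr d c' \<Longrightarrow> cg_A V E k d"
    and "mcg_B (RV V E c) (RE V E c) k c' \<Longrightarrow> corr d c' \<Longrightarrow> cg_B V E k d"
proof (induction arbitrary: d and d rule: mcg_A_mcg_B.inducts)
  case (mcgA_done c')
  then show ?case using nstuck_tr complete_tr by (blast intro: cg_A_cg_B.cgA_done)
next
  case (mcgA_move c' p a)
  obtain W D v where pd: "p = ((W,D),v)" by (cases p) auto
  have pR: "p \<in> RV V E c" "c' p = None" "legal (RV V E c) (RE V E c) k c' p a"
    using mcgA_move(2) by (auto simp: move_def)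
  have dv: "d v = None" using pR mcgA_move(5) pd by auto
  have cv: "c v = None" using dv mcgA_move(5) pR pd by (auto simp: RV_mem dest!: trunk_WV) 
  have vV: "v \<in> V" using pR pd by (auto simp: RV_mem dest!: trunk_WV)
  have pR': "((W,D),v) \<in> RV V E c" "legal (RV V E c) (RE V E c) k c' ((W,D),v) a" using pR pd by auto
  have "legal V E k d v a" using legal_RF[OF pR'(1) cv pR'(2) mcgA_move(5)] .
  then have mv: "move V E k d v a" using vV dv by (simp add: move_def)
  have "cg_B V E k (d(v := Some a))"
    using mcgA_move(4) corr_upd[OF pR'(1) cv mcgA_move(5), of a] pd by simp
  then show ?case using nstuck_tr mcgA_move(1,5) mv by (blast intro: cg_A_cg_B.cgA_move)
next
  case (mcgB_done c')
  then show ?case using nstuck_tr complete_tr by (blast intro: cg_A_cg_B.cgB_done)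
next
  case (mcgB_move c')
  have ns: "\<not> stuck V E k d" using nstuck_tr mcgB_move(1,5) by blast
  have "\<forall>v a. move V E k d v a \<longrightarrow> cg_A V E k (d(v := Some a))"
  proof (intro allI impI)
    fix v a assume mv: "move V E k d v a"
    have vV: "v \<in> V" and dv: "d v = None" and l: "legal V E k d v a" using mv by (auto simp: move_def)
    have cv: "c v = None" using dv mcgB_move(5) vV by force
    then obtain W D where "is_trunk V E c W D" "v \<in> W" using trunk_exists vV by blast
    then have p: "((W,D),v) \<in> RV V E c" by (simp add: RV_mem)
    have cp: "c' ((W,D),v) = None" using p mcgB_move(5) dv by auto
    have "move (RV V E c) (RE V E c) k c' ((W,D),v) a"
      using legal_FR[OF p l mcgB_move(5)] p cp by (simp add: move_def)
    then show "cg_A V E k (d(v := Some a))"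
      using mcgB_move(4) corr_upd[OF p cv mcgB_move(5)] by blast
  qed
  then show ?case using ns by (blast intro: cg_A_cg_B.cgB_move)
qed

end

theorem lemma2p1:
  fixes V :: "'v set" and E :: "'v \<Rightarrow> 'v \<Rightarrow> bool" and c :: "'v \<Rightarrow> nat option" and k :: nat
  assumes "k \<ge> 1"
    and "forest V E"
    and "partial_coloring V E k c"
    and "alice_wins_mcg (RV V E c) (RE V E c) k (Rc c)"
  shows "alice_wins_cg V E k c"
proof -
  have B: "mcg_B (RV V E c) (RE V E c) k (Rc c)" using assms(4) by (simp add: alice_wins_mcg_def)
  have A: "mcg_A (RV V E c) (RE V E c) k (Rc c)"
    using B by (cases rule: mcg_B.cases) (auto intro: mcg_A_mcg_B.mcgA_done)
  have "cg_A V E k c" using sim(1)[OF assms(2) A] by (simp add: Rc_def)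
  then show ?thesis by (simp add: alice_wins_cg_def)
qed

end
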